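(* Let $G$ be a tree on $n\geq 2$ vertices with Randi\'c index $R$ and radius $r$. If $G$ is a path with an even number of vertices, greater than $2$, then \[R-r=\sqrt 2-\frac{3}{2};\] otherwise \[R-r\geq 0,\] with equality for the path on $2$ vertices.
   Context: The Randi\'c index is $R(G)=\sum_{uv\in E(G)}\frac{1}{\sqrt{d_ud_v}}$, where $d_v$ is the degree of $v$. The radius is the minimum over vertices $v$ of the maximum distance from $v$ to another vertex. *)

theory Defs
  imports Complex_Main
begin

definition simple_graph :: "'a set \<Rightarrow> ('a \<Rightarrow> 'a \<Rightarrow> bool) \<Rightarrow> bool" where
  "simple_graph V E \<longleftrightarrow> finite V \<and> (\<forall>u v. E u v \<longrightarrow> u \<in> V \<and> v \<in> V)
     \<and> (\<forall>u v. E u v \<longrightarrow> E v u) \<and> (\<forall>v. \<not> E v v)"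

definition edges :: "'a set \<Rightarrow> ('a \<Rightarrow> 'a \<Rightarrow> bool) \<Rightarrow> 'a set set" where
  "edges V E = {{u, v} | u v. u \<in> V \<and> v \<in> V \<and> E u v}"

definition degree :: "'a set \<Rightarrow> ('a \<Rightarrow> 'a \<Rightarrow> bool) \<Rightarrow> 'a \<Rightarrow> nat" where
  "degree V E v = card {u \<in> V. E v u}"

definition adj_rel :: "'a set \<Rightarrow> ('a \<Rightarrow> 'a \<Rightarrow> bool) \<Rightarrow> ('a \<times> 'a) set" where
  "adj_rel V E = {(u, v). u \<in> V \<and> v \<in> V \<and> E u v}"

definition connected_graph :: "'a set \<Rightarrow> ('a \<Rightarrow> 'a \<Rightarrow> bool) \<Rightarrow> bool" where
  "connected_graph V E \<longleftrightarrow> (\<forall>u\<in>V. \<forall>v\<in>V. (u, v) \<in> (adj_rel V E)\<^sup>*)"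

definition has_cycle :: "'a set \<Rightarrow> ('a \<Rightarrow> 'a \<Rightarrow> bool) \<Rightarrow> bool" where
  "has_cycle V E \<longleftrightarrow> (\<exists>xs. length xs \<ge> 3 \<and> distinct xs \<and> set xs \<subseteq> V
      \<and> (\<forall>i. Suc i < length xs \<longrightarrow> E (xs ! i) (xs ! Suc i))
      \<and> E (last xs) (hd xs))"

definition is_tree :: "'a set \<Rightarrow> ('a \<Rightarrow> 'a \<Rightarrow> bool) \<Rightarrow> bool" where
  "is_tree V E \<longleftrightarrow> simple_graph V E \<and> V \<noteq> {} \<and> connected_graph V E \<and> \<not> has_cycle V E"

definition is_path_graph :: "'a set \<Rightarrow> ('a \<Rightarrow> 'a \<Rightarrow> bool) \<Rightarrow> bool" where
  "is_path_graph V E \<longleftrightarrow> (\<exists>xs. distinct xs \<and> set xs = V \<and>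
      (\<forall>u\<in>V. \<forall>v\<in>V. E u v \<longleftrightarrow>
          (\<exists>i. Suc i < length xs \<and> {xs ! i, xs ! Suc i} = {u, v})))"

definition randic :: "'a set \<Rightarrow> ('a \<Rightarrow> 'a \<Rightarrow> bool) \<Rightarrow> real" where
  "randic V E = (\<Sum>e\<in>edges V E. 1 / sqrt (\<Prod>x\<in>e. real (degree V E x)))"

definition dist :: "'a set \<Rightarrow> ('a \<Rightarrow> 'a \<Rightarrow> bool) \<Rightarrow> 'a \<Rightarrow> 'a \<Rightarrow> nat" where
  "dist V E u v = (LEAST k. (u, v) \<in> (adj_rel V E) ^^ k)"

definition eccentricity :: "'a set \<Rightarrow> ('a \<Rightarrow> 'a \<Rightarrow> bool) \<Rightarrow> 'a \<Rightarrow> nat" where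
  "eccentricity V E v = Max (dist V E v ` V)"

definition radius :: "'a set \<Rightarrow> ('a \<Rightarrow> 'a \<Rightarrow> bool) \<Rightarrow> nat" where
  "radius V E = Min (eccentricity V E ` V)"

end

theory Submission
  imports Defs
begin


fun gwalk :: "('a \<Rightarrow> 'a \<Rightarrow> bool) \<Rightarrow> 'a list \<Rightarrow> bool" where
  "gwalk E [] = True"
| "gwalk E [x] = True"
| "gwalk E (x # y # xs) = (E x y \<and> gwalk E (y # xs))"

lemma gwalk_Cons: "gwalk E (x # xs) \<longleftrightarrow> gwalk E xs \<and> (xs \<noteq> [] \<longrightarrow> E x (hd xs))"
  by (cases xs) auto

lemma gwalk_append:
  "gwalk E (xs @ ys) \<longleftrightarrow> gwalk E xs \<and> gwalk E ys \<and> (xs \<noteq> [] \<longrightarrow> ys \<noteq> [] \<longrightarrow> E (last xs) (hd ys))"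
  by (induction xs) (auto simp: gwalk_Cons)

lemma gwalk_rev:
  assumes "\<And>x y. E x y \<Longrightarrow> E y x"
  shows "gwalk E (rev xs) = gwalk E xs"
  by (induction xs) (auto simp: gwalk_append gwalk_Cons hd_rev last_rev intro: assms)

lemma gwalk_nth: "gwalk E xs \<longleftrightarrow> (\<forall>i. Suc i < length xs \<longrightarrow> E (xs ! i) (xs ! Suc i))"
proof (induction xs)
  case Nil then show ?case by simp
next
  case (Cons x xs)
  show ?case
  proof (cases xs)
    case Nil then show ?thesis by simp
  next
    case (Cons y ys)
    have "(\<forall>i. Suc i < length (x # xs) \<longrightarrow> E ((x # xs) ! i) ((x # xs) ! Suc i))
        \<longleftrightarrow> E x y \<and> (\<forall>i. Suc i < length xs \<longrightarrow> E (xs ! i) (xs ! Suc i))"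
      using Cons by (auto simp: less_Suc_eq_0_disj nth_Cons split: nat.splits)
    then show ?thesis using Cons \<open>gwalk E xs = _\<close> by simp
  qed
qed

lemma gwalk_mono: "gwalk E xs \<Longrightarrow> (\<And>x y. E x y \<Longrightarrow> F x y) \<Longrightarrow> gwalk F xs"
  by (induction E xs rule: gwalk.induct) auto

lemma gwalk_take: "gwalk E xs \<Longrightarrow> gwalk E (take n xs)"
  by (metis append_take_drop_id gwalk_append)

lemma gwalk_drop: "gwalk E xs \<Longrightarrow> gwalk E (drop n xs)"
  by (metis append_take_drop_id gwalk_append)

lemma relpow_walk:
  assumes "(x, y) \<in> (adj_rel V E) ^^ k" "x \<in> V"
  shows "\<exists>xs. gwalk E xs \<and> length xs = Suc k \<and> hd xs = x \<and> last xs = y \<and> set xs \<subseteq> V"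
  using assms(1)
proof (induction k arbitrary: y)
  case 0 then show ?case using assms(2) by (intro exI[of _ "[x]"]) auto
next
  case (Suc k)
  then obtain z where z: "(x, z) \<in> (adj_rel V E) ^^ k" "(z, y) \<in> adj_rel V E"
    by (meson relpow_Suc_E)
  obtain xs where xs: "gwalk E xs" "length xs = Suc k" "hd xs = x" "last xs = z" "set xs \<subseteq> V"
    using Suc.IH[OF z(1)] by blast
  show ?case
    using xs z(2) by (intro exI[of _ "xs @ [y]"]) (auto simp: gwalk_append adj_rel_def hd_append)
qed

lemma walk_relpow:
  assumes "gwalk E xs" "xs \<noteq> []" "set xs \<subseteq> V"
  shows "(hd xs, last xs) \<in> (adj_rel V E) ^^ (length xs - 1)"
  using assms
proof (induction xs)
  case Nil then show ?case by simp
next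
  case (Cons x xs)
  show ?case
  proof (cases xs)
    case Nil then show ?thesis by simp
  next
    case (Cons y ys)
    have "(hd xs, last xs) \<in> (adj_rel V E) ^^ (length xs - 1)"
      using Cons.IH Cons.prems by (auto simp: gwalk_Cons \<open>xs = _\<close>)
    moreover have "(x, hd xs) \<in> adj_rel V E"
      using Cons.prems \<open>xs = _\<close> by (auto simp: adj_rel_def)
    ultimately have "(x, last xs) \<in> (adj_rel V E) ^^ Suc (length xs - 1)"
      by (meson relpow_Suc_I2)
    then show ?thesis using \<open>xs = _\<close> by simp
  qed
qed



lemma sg_sym: "simple_graph V E \<Longrightarrow> E x y \<Longrightarrow> E y x"
  by (auto simp: simple_graph_def)

lemma sg_in: "simple_graph V E \<Longrightarrow> E x y \<Longrightarrow> x \<in> V \<and> y \<in> V"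
  by (auto simp: simple_graph_def)

lemma sg_irr: "simple_graph V E \<Longrightarrow> \<not> E x x"
  by (auto simp: simple_graph_def)

lemma sg_fin: "simple_graph V E \<Longrightarrow> finite V"
  by (auto simp: simple_graph_def)

lemma dist_le_relpow: "(x, y) \<in> (adj_rel V E) ^^ k \<Longrightarrow> dist V E x y \<le> k"
  unfolding dist_def by (rule Least_le)

lemma dist_relpow: "(x, y) \<in> (adj_rel V E)\<^sup>* \<Longrightarrow> (x, y) \<in> (adj_rel V E) ^^ (dist V E x y)"
  unfolding dist_def rtrancl_power by (rule LeastI_ex)

lemma dist_walk_le:
  assumes "gwalk E xs" "xs \<noteq> []" "set xs \<subseteq> V"
  shows "dist V E (hd xs) (last xs) \<le> length xs - 1"
  by (rule dist_le_relpow[OF walk_relpow[OF assms]])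

lemma shortest_path:
  assumes "(x, y) \<in> (adj_rel V E)\<^sup>*" "x \<in> V"
  shows "\<exists>xs. gwalk E xs \<and> distinct xs \<and> length xs = Suc (dist V E x y) \<and> hd xs = x \<and> last xs = y
            \<and> set xs \<subseteq> V"
proof -
  obtain xs where xs: "gwalk E xs" "length xs = Suc (dist V E x y)" "hd xs = x" "last xs = y" "set xs \<subseteq> V"
    using relpow_walk[OF dist_relpow[OF assms(1)] assms(2)] by blast
  have "distinct xs"
  proof (rule ccontr)
    assume "\<not> distinct xs"
    then obtain as z bs cs where eq: "xs = as @ [z] @ bs @ [z] @ cs"
      using not_distinct_decomp by blast
    define ys where "ys = as @ [z] @ cs"
    have w1: "gwalk E (as @ [z])" using xs(1) unfolding eq
      by (metis append.assoc gwalk_append)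
    have w2: "gwalk E ([z] @ cs)" using xs(1) unfolding eq
      by (metis gwalk_append)
    have "gwalk E ys" unfolding ys_def using w1 w2
      by (metis append.assoc append_is_Nil_conv gwalk_append hd_append2 last_appendR last_snoc list.distinct(1) list.sel(1) not_Cons_self2)
    moreover have "ys \<noteq> []" "set ys \<subseteq> V" using xs(5) unfolding ys_def eq by auto
    moreover have "hd ys = x" "last ys = y" using xs(3,4) unfolding ys_def eq
      by (auto simp: hd_append)
    ultimately have "dist V E x y \<le> length ys - 1"
      using dist_walk_le by metis
    moreover have "length ys < length xs" unfolding ys_def eq by simp
    moreover have "length ys > 0" using \<open>ys \<noteq> []\<close> by simp
    ultimately show False using xs(2) by linarith
  qed
  then show ?thesis using xs by blast
qed

lemma conn_rtrancl: "connected_graph V E \<Longrightarrow> x \<in> V \<Longrightarrow> y \<in> V \<Longrightarrow> (x, y) \<in> (adj_rel V E)\<^sup>*"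
  by (auto simp: connected_graph_def)

lemma dist_sym_le:
  assumes "simple_graph V E" "connected_graph V E" "x \<in> V" "y \<in> V"
  shows "dist V E y x \<le> dist V E x y"
proof -
  obtain xs where xs: "gwalk E xs" "length xs = Suc (dist V E x y)" "hd xs = x" "last xs = y" "set xs \<subseteq> V"
    using shortest_path[OF conn_rtrancl[OF assms(2,3,4)] assms(3)] by blast
  have "gwalk E (rev xs)" using xs(1) gwalk_rev[of E xs] sg_sym[OF assms(1)] by blast
  moreover have "rev xs \<noteq> []" "set (rev xs) \<subseteq> V" using xs by auto
  ultimately have "dist V E (hd (rev xs)) (last (rev xs)) \<le> length (rev xs) - 1"
    by (rule dist_walk_le)
  then show ?thesis using xs by (simp add: hd_rev last_rev)
qed

lemma dist_sym:
  assumes "simple_graph V E" "connected_graph V E" "x \<in> V" "y \<in> V"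
  shows "dist V E y x = dist V E x y"
  using dist_sym_le[OF assms] dist_sym_le[OF assms(1,2,4,3)] by simp

lemma dist_triangle:
  assumes "connected_graph V E" "x \<in> V" "y \<in> V" "z \<in> V"
  shows "dist V E x z \<le> dist V E x y + dist V E y z"
proof -
  have "(x, y) \<in> (adj_rel V E) ^^ dist V E x y" "(y, z) \<in> (adj_rel V E) ^^ dist V E y z"
    using dist_relpow conn_rtrancl assms by metis+
  then have "(x, z) \<in> (adj_rel V E) ^^ (dist V E x y + dist V E y z)"
    by (auto simp: relpow_add)
  then show ?thesis by (rule dist_le_relpow)
qed

lemma dist_nth:
  assumes "gwalk E P" "set P \<subseteq> V" "i \<le> j" "j < length P"
  shows "dist V E (P ! i) (P ! j) \<le> j - i"
proof -
  define S where "S = take (Suc (j - i)) (drop i P)"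
  have "gwalk E S" unfolding S_def using assms(1) by (simp add: gwalk_take gwalk_drop)
  moreover have "S \<noteq> []" "set S \<subseteq> V" unfolding S_def using assms
    by (auto dest: in_set_takeD in_set_dropD)
  moreover have "hd S = P ! i" "last S = P ! j" "length S = Suc (j - i)" unfolding S_def using assms
    by (auto simp: hd_take hd_drop_conv_nth last_conv_nth)
  ultimately show ?thesis using dist_walk_le[of E S V] by simp
qed



lemma has_cycleI:
  assumes "gwalk E C" "length C \<ge> 3" "distinct C" "set C \<subseteq> V" "E (last C) (hd C)"
  shows "has_cycle V E"
  unfolding has_cycle_def using assms gwalk_nth by blast

lemma path_unique:
  assumes G: "simple_graph V E" "\<not> has_cycle V E"
  shows "gwalk E P \<Longrightarrow> distinct P \<Longrightarrow> set P \<subseteq> V \<Longrightarrow> P \<noteq> [] \<Longrightarrow>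
         gwalk E Q \<Longrightarrow> distinct Q \<Longrightarrow> set Q \<subseteq> V \<Longrightarrow> Q \<noteq> [] \<Longrightarrow>
         hd P = hd Q \<Longrightarrow> last P = last Q \<Longrightarrow> P = Q"
proof (induction P arbitrary: Q)
  case Nil then show ?case by simp
next
  case (Cons a P')
  obtain Q' where Q: "Q = a # Q'" using Cons.prems by (cases Q) auto
  show ?case
  proof (cases "P' = []")
    case True
    then have "last Q = a" using Cons.prems by simp
    then have "Q' = []" using Cons.prems(6) Q by (cases Q') (auto, metis last_in_set list.distinct(1))
    then show ?thesis using True Q by simp
  next
    case P'ne: False
    show ?thesis
    proof (cases "Q' = []")
      case True
      then have "last P' = a" using Cons.prems Q P'ne by simp
      then have False using Cons.prems(2) P'ne by (metis distinct.simps(2) last_in_set)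
      then show ?thesis ..
    next
      case Q'ne: False
      show ?thesis
      proof (cases "hd P' = hd Q'")
        case True
        have "P' = Q'"
          apply (rule Cons.IH)
          using Cons.prems Q P'ne Q'ne True by (auto simp: gwalk_Cons)
        then show ?thesis using Q by simp
      next
        case False
        have "\<exists>x\<in>set Q'. x \<in> set P'"
          using Cons.prems Q P'ne Q'ne by (intro bexI[of _ "last Q'"]) (auto, metis last_in_set)
        then obtain Q1 z Q2 where Qs: "Q' = Q1 @ z # Q2" "z \<in> set P'" "\<forall>y\<in>set Q1. y \<notin> set P'"
          using split_list_first_prop[of Q' "\<lambda>x. x \<in> set P'"] by blast
        obtain P1 P2 where Ps: "P' = P1 @ z # P2" using Qs(2) split_list by metis
        define C where "C = a # P1 @ z # rev Q1"
        have w1: "gwalk E (a # P1 @ [z])"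
          using Cons.prems(1) unfolding Ps by (metis append_Cons append_assoc gwalk_append append.left_neutral append_Cons[symmetric])
        have "gwalk E (a # Q1 @ [z])"
          using Cons.prems(5) unfolding Q Qs by (metis append_Cons append_assoc gwalk_append append.left_neutral)
        then have w2: "gwalk E ((z # rev Q1) @ [a])"
          using gwalk_rev[of E "a # Q1 @ [z]"] sg_sym[OF G(1)] by simp
        have c: "gwalk E (z # rev Q1) \<and> gwalk E [a] \<and> (z # rev Q1 \<noteq> [] \<longrightarrow> [a] \<noteq> [] \<longrightarrow> E (last (z # rev Q1)) (hd [a]))"
          by (rule gwalk_append[THEN iffD1, OF w2])
        then have w2': "gwalk E (z # rev Q1)" by blast
        from c have cl: "E (last (z # rev Q1)) a" by simp
        have "gwalk E C" unfolding C_def using w1 w2'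
          by (auto simp: gwalk_append gwalk_Cons hd_append)
        moreover have "E (last C) (hd C)" unfolding C_def using cl
          by (simp add: last_append)
        moreover have "distinct C" unfolding C_def using Cons.prems(2,6) Qs Ps Q by auto
        moreover have "set C \<subseteq> V" unfolding C_def using Cons.prems(3,7) Qs Ps Q by auto
        moreover have "length C \<ge> 3"
        proof (cases "Q1 = []")
          case True
          then have "P1 \<noteq> []" using False Qs Ps by auto
          then show ?thesis unfolding C_def by (cases P1) auto
        next
          case False
          then show ?thesis unfolding C_def by (cases Q1) auto
        qed
        ultimately have "has_cycle V E" by (intro has_cycleI)
        then show ?thesis using G(2) by simp
      qed
    qed
  qed
qed



definition gpath :: "'a set \<Rightarrow> ('a \<Rightarrow> 'a \<Rightarrow> bool) \<Rightarrow> 'a list \<Rightarrow> bool" where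
  "gpath V E xs \<longleftrightarrow> gwalk E xs \<and> distinct xs \<and> set xs \<subseteq> V \<and> xs \<noteq> []"

lemma tree_sg: "is_tree V E \<Longrightarrow> simple_graph V E" by (simp add: is_tree_def)
lemma tree_conn: "is_tree V E \<Longrightarrow> connected_graph V E" by (simp add: is_tree_def)
lemma tree_nc: "is_tree V E \<Longrightarrow> \<not> has_cycle V E" by (simp add: is_tree_def)

lemma tree_path_unique:
  "is_tree V E \<Longrightarrow> gpath V E P \<Longrightarrow> gpath V E Q \<Longrightarrow> hd P = hd Q \<Longrightarrow> last P = last Q \<Longrightarrow> P = Q"
  using path_unique[of V E P Q] by (auto simp: is_tree_def gpath_def)

lemma tree_shortest:
  assumes "is_tree V E" "x \<in> V" "y \<in> V"
  shows "\<exists>xs. gpath V E xs \<and> length xs = Suc (dist V E x y) \<and> hd xs = x \<and> last xs = y"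
proof -
  obtain xs where "gwalk E xs" "distinct xs" "length xs = Suc (dist V E x y)" "hd xs = x" "last xs = y"
       "set xs \<subseteq> V"
    using shortest_path[OF conn_rtrancl[OF tree_conn[OF assms(1)] assms(2,3)] assms(2)] by blast
  moreover then have "gpath V E xs" unfolding gpath_def by auto
  ultimately show ?thesis by blast
qed

lemma tree_geodesic:
  assumes "is_tree V E" "gpath V E P"
  shows "dist V E (hd P) (last P) = length P - 1"
proof -
  have "hd P \<in> V" "last P \<in> V" using assms(2) by (auto simp: gpath_def)
  then obtain Q where Q: "gpath V E Q" "length Q = Suc (dist V E (hd P) (last P))" "hd Q = hd P" "last Q = last P"
    using tree_shortest[OF assms(1) \<open>hd P \<in> V\<close> \<open>last P \<in> V\<close>] by metis
  have "P = Q" using tree_path_unique[OF assms(1,2) Q(1)] Q(3,4) by argo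
  then show ?thesis using Q(2) by simp
qed

lemma gpath_segment:
  assumes "gpath V E P" "i \<le> j" "j < length P"
  shows "gpath V E (take (Suc (j - i)) (drop i P))"
    and "hd (take (Suc (j - i)) (drop i P)) = P ! i"
    and "last (take (Suc (j - i)) (drop i P)) = P ! j"
    and "length (take (Suc (j - i)) (drop i P)) = Suc (j - i)"
proof -
  have g: "gwalk E P" "distinct P" "set P \<subseteq> V" "P \<noteq> []" using assms(1) by (auto simp: gpath_def)
  let ?S = "take (Suc (j - i)) (drop i P)"
  have "gwalk E ?S" using g(1) by (simp add: gwalk_take gwalk_drop)
  moreover have "distinct ?S" using g(2) by simp
  moreover have "set ?S \<subseteq> V" using g(3) by (meson in_set_dropD in_set_takeD subset_iff)
  moreover have "?S \<noteq> []" using assms(2,3) by simp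
  ultimately show "gpath V E ?S" by (simp add: gpath_def)
  show "hd ?S = P ! i" using assms(2,3) by (simp add: hd_take hd_drop_conv_nth)
  show "length ?S = Suc (j - i)" using assms(2,3) by simp
  then show "last ?S = P ! j" using assms(2,3) by (simp add: last_conv_nth)
qed

lemma tree_dist_nth:
  assumes "is_tree V E" "gpath V E P" "i \<le> j" "j < length P"
  shows "dist V E (P ! i) (P ! j) = j - i"
  using tree_geodesic[OF assms(1) gpath_segment(1)[OF assms(2-4)]] gpath_segment(2-4)[OF assms(2-4)]
  by simp

definition rmE :: "('a \<Rightarrow> 'a \<Rightarrow> bool) \<Rightarrow> 'a \<Rightarrow> 'a \<Rightarrow> 'a \<Rightarrow> bool" where
  "rmE E u = (\<lambda>x y. E x y \<and> x \<noteq> u \<and> y \<noteq> u)"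

lemma path_avoids_leaf:
  assumes "simple_graph V E" "{y \<in> V. E u y} = {w}" "gpath V E xs" "u \<noteq> hd xs" "u \<noteq> last xs"
  shows "u \<notin> set xs"
proof
  assume "u \<in> set xs"
  then obtain i where i: "i < length xs" "xs ! i = u" by (metis in_set_conv_nth)
  have ne: "xs \<noteq> []" using assms(3) by (simp add: gpath_def)
  have "i \<noteq> 0" using i assms(4) ne by (metis hd_conv_nth)
  moreover have "i \<noteq> length xs - 1" using i assms(5) ne by (auto simp: last_conv_nth)
  ultimately have i2: "Suc i < length xs" "0 < i" using i by auto
  have w: "gwalk E xs" and d: "distinct xs" and s: "set xs \<subseteq> V" using assms(3) by (auto simp: gpath_def)
  have si: "Suc (i - 1) = i" using i2 by simp
  have "Suc (i - 1) < length xs" using i2 by simp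
  then have "E (xs ! (i - 1)) (xs ! Suc (i - 1))" by (rule gwalk_nth[THEN iffD1, OF w, rule_format])
  then have "E (xs ! (i - 1)) u" unfolding si i(2) .
  then have e1: "E u (xs ! (i - 1))" by (rule sg_sym[OF assms(1)])
  have "E (xs ! i) (xs ! Suc i)" using i2(1) by (rule gwalk_nth[THEN iffD1, OF w, rule_format])
  then have e2: "E u (xs ! Suc i)" unfolding i(2) .
  have "xs ! (i - 1) \<in> V" "xs ! Suc i \<in> V" using s i2 by (auto simp: subset_iff)
  then have "xs ! (i - 1) \<in> {y \<in> V. E u y}" "xs ! Suc i \<in> {y \<in> V. E u y}" using e1 e2 by auto
  then have "xs ! (i - 1) = w" "xs ! Suc i = w" unfolding assms(2) by auto
  then have "xs ! (i - 1) = xs ! Suc i" by simp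
  then show False using d i2 by (simp add: nth_eq_iff_index_eq)
qed

lemma leaf_facts:
  assumes "simple_graph V E" "u \<in> V" "{y \<in> V. E u y} = {w}"
  shows "w \<in> V" "w \<noteq> u" "E u w" "E w u" "\<And>x. x \<in> V \<Longrightarrow> E x u \<Longrightarrow> x = w"
proof -
  have "w \<in> {y \<in> V. E u y}" unfolding assms(3) by simp
  then show w: "w \<in> V" "E u w" by auto
  from w(2) show "E w u" by (rule sg_sym[OF assms(1)])
  show "w \<noteq> u" using w sg_irr[OF assms(1)] by metis
  fix x assume "x \<in> V" "E x u"
  then have "x \<in> {y \<in> V. E u y}" using sg_sym[OF assms(1)] by blast
  then show "x = w" unfolding assms(3) by simp
qed

lemma rm_path:
  assumes "simple_graph V E" "{y \<in> V. E u y} = {w}" "gpath V E xs" "u \<noteq> hd xs" "u \<noteq> last xs"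
  shows "gpath (V - {u}) (rmE E u) xs"
proof -
  have nu: "u \<notin> set xs" by (rule path_avoids_leaf[OF assms])
  have "gwalk E xs" using assms(3) by (simp add: gpath_def)
  then have "gwalk (rmE E u) xs" using nu unfolding gwalk_nth rmE_def
    by (metis nth_mem Suc_lessD)
  then show ?thesis using assms(3) nu by (auto simp: gpath_def)
qed

lemma rm_sg: "simple_graph V E \<Longrightarrow> simple_graph (V - {u}) (rmE E u)"
  by (auto simp: simple_graph_def rmE_def)

lemma path_mono: "gpath (V - {u}) (rmE E u) xs \<Longrightarrow> gpath V E xs"
  unfolding gpath_def by (auto intro: gwalk_mono simp: rmE_def)

lemma rm_dist:
  assumes "is_tree V E" "{y \<in> V. E u y} = {w}" "x \<in> V - {u}" "y \<in> V - {u}"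
  shows "dist (V - {u}) (rmE E u) x y = dist V E x y"
    and "(x, y) \<in> (adj_rel (V - {u}) (rmE E u))\<^sup>*"
proof -
  have sg: "simple_graph V E" using assms(1) by (rule tree_sg)
  obtain xs where xs: "gpath V E xs" "length xs = Suc (dist V E x y)" "hd xs = x" "last xs = y"
    using tree_shortest[OF assms(1)] assms(3,4) by blast
  have p': "gpath (V - {u}) (rmE E u) xs" using rm_path[OF sg assms(2) xs(1)] xs assms by auto
  have r: "(x, y) \<in> (adj_rel (V - {u}) (rmE E u)) ^^ dist V E x y"
    using walk_relpow[of "rmE E u" xs "V - {u}"] p' xs by (auto simp: gpath_def)
  then show r2: "(x, y) \<in> (adj_rel (V - {u}) (rmE E u))\<^sup>*" by (meson relpow_imp_rtrancl)
  have le: "dist (V - {u}) (rmE E u) x y \<le> dist V E x y" using r by (rule dist_le_relpow)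
  obtain ys where ys0: "gwalk (rmE E u) ys" "distinct ys" "length ys = Suc (dist (V - {u}) (rmE E u) x y)"
      "hd ys = x" "last ys = y" "set ys \<subseteq> V - {u}"
    using shortest_path[OF r2] assms(3) by blast
  have ys: "gpath (V - {u}) (rmE E u) ys" "length ys = Suc (dist (V - {u}) (rmE E u) x y)"
      "hd ys = x" "last ys = y" using ys0 by (auto simp: gpath_def)
  have "gpath V E ys" using ys(1) by (rule path_mono)
  then have "dist V E x y \<le> length ys - 1" using dist_walk_le[of E ys V] ys by (auto simp: gpath_def)
  then show "dist (V - {u}) (rmE E u) x y = dist V E x y" using le ys(2) by simp
qed

lemma rm_tree:
  assumes "is_tree V E" "{y \<in> V. E u y} = {w}" "u \<in> V" "card V \<ge> 2"
  shows "is_tree (V - {u}) (rmE E u)"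
proof -
  have sg: "simple_graph V E" using assms(1) by (rule tree_sg)
  have "simple_graph (V - {u}) (rmE E u)" using sg by (rule rm_sg)
  moreover have "w \<in> V - {u}" using leaf_facts(1,2)[OF sg assms(3,2)] by simp
  then have "V - {u} \<noteq> {}" by blast
  moreover have "connected_graph (V - {u}) (rmE E u)"
    unfolding connected_graph_def
  proof (intro ballI)
    fix x y assume "x \<in> V - {u}" "y \<in> V - {u}"
    then show "(x, y) \<in> (adj_rel (V - {u}) (rmE E u))\<^sup>*" by (rule rm_dist(2)[OF assms(1,2)])
  qed
  moreover have "\<not> has_cycle (V - {u}) (rmE E u)"
  proof
    assume "has_cycle (V - {u}) (rmE E u)"
    then obtain xs where "length xs \<ge> 3 \<and> distinct xs \<and> set xs \<subseteq> V - {u}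
      \<and> (\<forall>i. Suc i < length xs \<longrightarrow> rmE E u (xs ! i) (xs ! Suc i)) \<and> rmE E u (last xs) (hd xs)"
      unfolding has_cycle_def by blast
    then have "length xs \<ge> 3 \<and> distinct xs \<and> set xs \<subseteq> V
      \<and> (\<forall>i. Suc i < length xs \<longrightarrow> E (xs ! i) (xs ! Suc i)) \<and> E (last xs) (hd xs)"
      unfolding rmE_def by blast
    then have "has_cycle V E" unfolding has_cycle_def by blast
    then show False using assms(1) by (simp add: is_tree_def)
  qed
  ultimately show ?thesis by (simp add: is_tree_def)
qed



lemma gpath_rev: "simple_graph V E \<Longrightarrow> gpath V E xs \<Longrightarrow> gpath V E (rev xs)"
  unfolding gpath_def using gwalk_rev[of E xs] sg_sym[of V E] by auto

lemma gpath_join: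
  assumes "gpath V E (xs @ [z])" "gpath V E (z # ys)" "set xs \<inter> set (z # ys) = {}"
  shows "gpath V E (xs @ z # ys)"
proof -
  have w1: "gwalk E (xs @ [z])" and w2: "gwalk E (z # ys)" using assms by (auto simp: gpath_def)
  have "gwalk E (xs @ [z] @ ys)"
  proof -
    have "gwalk E ([z] @ ys)" using w2 by simp
    then have "gwalk E ys \<and> (ys \<noteq> [] \<longrightarrow> E z (hd ys))" using gwalk_Cons[of E z ys] by simp
    then show ?thesis using w1
      by (subst append_assoc[symmetric], subst gwalk_append) (auto simp: last_append)
  qed
  then show ?thesis using assms by (auto simp: gpath_def)
qed

lemma gpath_take: "gpath V E xs \<Longrightarrow> n > 0 \<Longrightarrow> gpath V E (take n xs)"
  unfolding gpath_def by (auto simp: gwalk_take dest: in_set_takeD)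

lemma gpath_drop: "gpath V E xs \<Longrightarrow> n < length xs \<Longrightarrow> gpath V E (drop n xs)"
  unfolding gpath_def by (auto simp: gwalk_drop dest: in_set_dropD)

lemma gpath_edge:
  assumes "simple_graph V E" "E x y"
  shows "gpath V E [x, y]"
  using assms sg_irr[OF assms(1)] sg_in[OF assms(1)] unfolding gpath_def by auto

lemma no_chord:
  assumes T: "is_tree V E" and P: "gpath V E P" and ij: "i < j" "j < length P"
    and e: "E (P ! i) (P ! j)"
  shows "j = Suc i"
proof (rule ccontr)
  assume ne: "j \<noteq> Suc i"
  have sg: "simple_graph V E" using T by (rule tree_sg)
  have "gpath V E [P ! i, P ! j]" using gpath_edge[OF sg e] .
  moreover have "gpath V E (take (Suc (j - i)) (drop i P))"
    "hd (take (Suc (j - i)) (drop i P)) = P ! i" "last (take (Suc (j - i)) (drop i P)) = P ! j"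
    "length (take (Suc (j - i)) (drop i P)) = Suc (j - i)"
    using gpath_segment[OF P, of i j] ij by auto
  ultimately have "[P ! i, P ! j] = take (Suc (j - i)) (drop i P)"
    using tree_path_unique[OF T] by (metis last.simps list.distinct(1) list.sel(1))
  then have "length [P ! i, P ! j] = Suc (j - i)" using \<open>length (take _ _) = _\<close> by metis
  then show False using ij ne by simp
qed

lemma path_len_card: "gpath V E xs \<Longrightarrow> finite V \<Longrightarrow> length xs \<le> card V"
  unfolding gpath_def by (metis card_mono distinct_card)

lemma longest_path:
  assumes T: "is_tree V E" and c: "card V \<ge> 2"
  shows "\<exists>P. gpath V E P \<and> length P \<ge> 2 \<and> (\<forall>Q. gpath V E Q \<longrightarrow> length Q \<le> length P)"
proof -
  have fin: "finite V" using sg_fin[OF tree_sg[OF T]] .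
  obtain x y where xy: "x \<in> V" "y \<in> V" "x \<noteq> y"
  proof -
    have "\<not> (\<forall>x\<in>V. \<forall>y\<in>V. x = y)"
    proof
      assume "\<forall>x\<in>V. \<forall>y\<in>V. x = y"
      then have "card V \<le> Suc 0" using card_le_Suc0_iff_eq[OF fin] by blast
      then show False using c by simp
    qed
    then show ?thesis using that by blast
  qed
  obtain R where R: "gpath V E R" "length R = Suc (dist V E x y)" "hd R = x" "last R = y"
    using tree_shortest[OF T xy(1,2)] by metis
  have "length R \<ge> 2"
  proof (rule ccontr)
    assume "\<not> length R \<ge> 2"
    then have "length R = 1" using R(2) by simp
    then obtain r where "R = [r]" by (metis One_nat_def length_0_conv length_Suc_conv)
    then show False using R(3,4) xy(3) by simp
  qed
  have "\<exists>P. gpath V E P \<and> (\<forall>Q. gpath V E Q \<longrightarrow> length Q \<le> length P)"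
    using ex_has_greatest_nat[of "gpath V E" R length "Suc (card V)"] R(1) path_len_card[OF _ fin]
    by (meson le_imp_less_Suc)
  then obtain P where "gpath V E P" "\<forall>Q. gpath V E Q \<longrightarrow> length Q \<le> length P" by blast
  moreover have "length P \<ge> 2" using calculation R(1) \<open>length R \<ge> 2\<close> by force
  ultimately show ?thesis by blast
qed

lemma longest_covers_path:
  assumes T: "is_tree V E" and P: "gpath V E P" and s: "set P = V"
  shows "is_path_graph V E"
proof -
  have sg: "simple_graph V E" using T by (rule tree_sg)
  have d: "distinct P" and w: "gwalk E P" using P by (auto simp: gpath_def)
  have "\<forall>u\<in>V. \<forall>v\<in>V. E u v \<longleftrightarrow> (\<exists>i. Suc i < length P \<and> {P ! i, P ! Suc i} = {u, v})"
  proof (intro ballI iffI)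
    fix u v assume uv: "u \<in> V" "v \<in> V" "E u v"
    obtain i where i: "i < length P" "P ! i = u" using uv(1) s by (metis in_set_conv_nth)
    obtain j where j: "j < length P" "P ! j = v" using uv(2) s by (metis in_set_conv_nth)
    have "i \<noteq> j" using i j uv(3) sg_irr[OF sg] by metis
    then consider "i < j" | "j < i" by linarith
    then show "\<exists>i. Suc i < length P \<and> {P ! i, P ! Suc i} = {u, v}"
    proof cases
      case 1
      then have "j = Suc i" using no_chord[OF T P 1 j(1)] i j uv(3) by simp
      then show ?thesis using i j by auto
    next
      case 2
      have "E v u" using uv(3) sg_sym[OF sg] by blast
      then have "i = Suc j" using no_chord[OF T P 2 i(1)] i j by simp
      then show ?thesis using i j by (intro exI[of _ j]) auto
    qed
  next
    fix u v assume uv: "u \<in> V" "v \<in> V" and "\<exists>i. Suc i < length P \<and> {P ! i, P ! Suc i} = {u, v}"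
    then obtain i where i: "Suc i < length P" "{P ! i, P ! Suc i} = {u, v}" by blast
    have e: "E (P ! i) (P ! Suc i)" using w i(1) gwalk_nth by blast
    from i(2) have "(u = P ! i \<and> v = P ! Suc i) \<or> (u = P ! Suc i \<and> v = P ! i)"
      by (auto simp: doubleton_eq_iff)
    then show "E u v" using e sg_sym[OF sg] by blast
  qed
  then show ?thesis unfolding is_path_graph_def using d s by blast
qed



lemma gpath_join2:
  assumes "gpath V E (xs @ [z])" "gpath V E Z" "hd Z = z" "set xs \<inter> set Z = {}"
  shows "gpath V E (xs @ Z)"
proof -
  have "Z \<noteq> []" using assms(2) by (simp add: gpath_def)
  then have Z: "Z = z # tl Z" using assms(3) by (metis list.collapse)
  have "gpath V E (xs @ z # tl Z)" using gpath_join[of V E xs z "tl Z"] assms Z by metis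
  then show ?thesis using Z by metis
qed

lemma tree_struct:
  assumes T: "is_tree V E" and c: "card V \<ge> 2" and np: "\<not> is_path_graph V E"
  shows "\<exists>u w. u \<in> V \<and> {y \<in> V. E u y} = {w} \<and> card V \<ge> 3 \<and> radius V E \<le> radius (V - {u}) (rmE E u)"
proof -
  have sg: "simple_graph V E" using T by (rule tree_sg)
  have fin: "finite V" using sg by (rule sg_fin)
  have conn: "connected_graph V E" using T by (rule tree_conn)
  obtain P where P: "gpath V E P" "length P \<ge> 2" and maxP: "\<And>Q. gpath V E Q \<Longrightarrow> length Q \<le> length P"
    using longest_path[OF T c] by blast
  have sP: "set P \<subseteq> V" and dP: "distinct P" and Pne: "P \<noteq> []" using P by (auto simp: gpath_def)
  have "set P \<noteq> V" using longest_covers_path[OF T P(1)] np by blast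
  then have pss: "set P \<subset> V" using sP by blast
  have c3: "card V \<ge> 3"
  proof -
    have "card (set P) < card V" using psubset_card_mono[OF fin pss] .
    moreover have "card (set P) = length P" using distinct_card[OF dP] .
    ultimately show ?thesis using P(2) by simp
  qed
  define a where "a = hd P"
  define b where "b = last P"
  define L where "L = length P - 1"
  define mid where "mid = L div 2"
  define h where "h = L - L div 2"
  define m where "m = P ! mid"
  have lenP: "length P = Suc L" using P(2) unfolding L_def by simp
  have aP: "a \<in> set P" "a = P ! 0" unfolding a_def using Pne by (auto simp: hd_conv_nth)
  have bP: "b \<in> set P" "b = P ! L" unfolding b_def L_def using Pne by (auto simp: last_conv_nth)
  have mP: "m \<in> set P" unfolding m_def mid_def using lenP by simp
  have aV: "a \<in> V" and bV: "b \<in> V" and mV: "m \<in> V" using aP bP mP sP by auto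
  define S where "S = V - set P"
  have Sfin: "finite S" and Sne: "S \<noteq> {}" unfolding S_def using fin pss by auto
  obtain u where uS: "u \<in> S" and umax: "\<And>v. v \<in> S \<Longrightarrow> dist V E a v \<le> dist V E a u"
  proof -
    let ?M = "Max (dist V E a ` S)"
    have "?M \<in> dist V E a ` S" using Sfin Sne by simp
    then obtain u where "u \<in> S" "dist V E a u = ?M" by auto
    moreover have "\<And>v. v \<in> S \<Longrightarrow> dist V E a v \<le> ?M" using Sfin by simp
    ultimately show ?thesis using that by metis
  qed
  have uV: "u \<in> V" and uP: "u \<notin> set P" using uS unfolding S_def by auto
  obtain R where R: "gpath V E R" "length R = Suc (dist V E u a)" "hd R = u" "last R = a"
    using tree_shortest[OF T uV aV] by metis
  have ua: "u \<noteq> a" using uP aP by blast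
  have R2: "length R \<ge> 2"
  proof (rule ccontr)
    assume "\<not> length R \<ge> 2"
    then have "length R = 1" using R(2) by simp
    then obtain r where "R = [r]" by (metis One_nat_def length_0_conv length_Suc_conv)
    then show False using R(3,4) ua by simp
  qed
  define s where "s = R ! 1"
  have wR: "gwalk E R" and dR: "distinct R" and sR: "set R \<subseteq> V" using R(1) by (auto simp: gpath_def)
  have R0: "R ! 0 = u" using R(3) R2 by (metis hd_conv_nth list.size(3) not_numeral_le_zero)
  have "E (R ! 0) (R ! Suc 0)" using R2 by (intro gwalk_nth[THEN iffD1, OF wR, rule_format]) simp
  then have us: "E u s" unfolding s_def R0 by simp
  have sV: "s \<in> V" using us sg_in[OF sg] by blast
  have nb: "y = s" if yV: "y \<in> V" and uy: "E u y" for y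
  proof (rule ccontr)
    assume ys: "y \<noteq> s"
    have yu: "y \<noteq> u" using uy sg_irr[OF sg] by metis
    show False
    proof (cases "y \<in> set R")
      case True
      then obtain i where i: "i < length R" "R ! i = y" by (metis in_set_conv_nth)
      have i0: "i \<noteq> 0" using i R0 yu by metis
      have i1: "i \<noteq> 1" using i ys unfolding s_def by metis
      have g1: "gpath V E [u, y]" using gpath_edge[OF sg uy] .
      have "gpath V E (take (Suc (i - 0)) (drop 0 R))" "hd (take (Suc (i - 0)) (drop 0 R)) = R ! 0"
        "last (take (Suc (i - 0)) (drop 0 R)) = R ! i" "length (take (Suc (i - 0)) (drop 0 R)) = Suc (i - 0)"
        using gpath_segment[OF R(1), of 0 i] i by auto
      then have g2: "gpath V E (take (Suc i) R)" "hd (take (Suc i) R) = u" "last (take (Suc i) R) = y"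
        "length (take (Suc i) R) = Suc i" using R0 i by auto
      have "[u, y] = take (Suc i) R" using tree_path_unique[OF T g1 g2(1)] g2(2,3) by simp
      then have "length [u, y] = Suc i" using g2(4) by metis
      then show False using i1 by simp
    next
      case False
      have "gpath V E [y, u]" using gpath_edge[OF sg sg_sym[OF sg uy]] .
      then have gyR: "gpath V E ([y] @ R)"
        using gpath_join2[of V E "[y]" u R] R(1,3) False by auto
      then have "dist V E (hd ([y] @ R)) (last ([y] @ R)) = length ([y] @ R) - 1"
        by (rule tree_geodesic[OF T])
      moreover have "R \<noteq> []" using R2 by auto
      ultimately have dya: "dist V E y a = Suc (dist V E u a)" using R by simp
      show False
      proof (cases "y \<in> set P")
        case False
        then have "y \<in> S" unfolding S_def using yV by simp
        then have "dist V E a y \<le> dist V E a u" by (rule umax)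
        moreover have "dist V E a y = dist V E y a" "dist V E a u = dist V E u a"
          using dist_sym[OF sg conn] yV uV aV by auto
        ultimately show False using dya by simp
      next
        case True
        then obtain j where j: "j < length P" "P ! j = y" by (metis in_set_conv_nth)
        have gt: "gpath V E (take (Suc j) P)" using gpath_take[OF P(1)] by simp
        have g2: "gpath V E (rev (take (Suc j) P))" using gpath_rev[OF sg gt] .
        have "hd (rev (take (Suc j) P)) = y" using j by (simp add: hd_rev take_Suc_conv_app_nth)
        moreover have "last (rev (take (Suc j) P)) = a" using Pne unfolding a_def by (simp add: last_rev hd_take)
        ultimately have "[y] @ R = rev (take (Suc j) P)"
          using tree_path_unique[OF T gyR g2] R(4) \<open>R \<noteq> []\<close> by simp
        then have "u \<in> set (rev (take (Suc j) P))" using R(3) R2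
          by (metis append_Cons append_Nil hd_in_set list.set_intros(2) list.size(3) not_numeral_le_zero)
        then have "u \<in> set P" by (auto dest: in_set_takeD)
        then show False using uP by simp
      qed
    qed
  qed
  have leaf: "{y \<in> V. E u y} = {s}" using nb us sV by blast
  have dm: "dist V E m x \<le> h" if xV: "x \<in> V" for x
  proof -
    obtain Q where Q: "gpath V E Q" "length Q = Suc (dist V E x m)" "hd Q = x" "last Q = m"
      using tree_shortest[OF T xV mV] by metis
    have "\<exists>v\<in>set Q. v \<in> set P" using Q mP by (metis gpath_def last_in_set)
    then obtain Q1 z Q2 where Qs: "Q = Q1 @ z # Q2" "z \<in> set P" "\<forall>v\<in>set Q1. v \<notin> set P"
      using split_list_first_prop[of Q "\<lambda>v. v \<in> set P"] by blast
    obtain j where j: "j < length P" "P ! j = z" using Qs(2) by (metis in_set_conv_nth)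
    define q where "q = length Q1"
    have tq: "take (Suc q) Q = Q1 @ [z]" unfolding q_def Qs(1) by simp
    have gq: "gpath V E (Q1 @ [z])" using gpath_take[OF Q(1), of "Suc q"] tq by simp
    have "hd (Q1 @ [z]) = x" using Q(3) unfolding Qs(1) by (cases Q1) auto
    then have dxz: "dist V E x z \<le> q"
      using dist_walk_le[of E "Q1 @ [z]" V] gq unfolding gpath_def q_def by auto
    have disj: "set Q1 \<inter> set P = {}" using Qs(3) by blast
    have gt: "gpath V E (take (Suc j) P)" using gpath_take[OF P(1)] by simp
    have g2: "gpath V E (rev (take (Suc j) P))" using gpath_rev[OF sg gt] .
    have "hd (rev (take (Suc j) P)) = z" using j by (simp add: hd_rev take_Suc_conv_app_nth)
    moreover have "set Q1 \<inter> set (rev (take (Suc j) P)) = {}" using disj by (auto dest: in_set_takeD)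
    ultimately have "gpath V E (Q1 @ rev (take (Suc j) P))" using gpath_join2[OF gq g2] by blast
    then have "length (Q1 @ rev (take (Suc j) P)) \<le> length P" by (rule maxP)
    then have c1: "q + j \<le> L" using j lenP unfolding q_def by simp
    have g3: "gpath V E (drop j P)" using gpath_drop[OF P(1) j(1)] .
    have "hd (drop j P) = z" using j by (simp add: hd_drop_conv_nth)
    moreover have "set Q1 \<inter> set (drop j P) = {}" using disj by (auto dest: in_set_dropD)
    ultimately have "gpath V E (Q1 @ drop j P)" using gpath_join2[OF gq g3] by blast
    then have "length (Q1 @ drop j P) \<le> length P" by (rule maxP)
    then have c2: "q \<le> j" using j lenP unfolding q_def by simp
    have zV: "z \<in> V" using Qs(2) sP by blast
    have midl: "mid < length P" using lenP unfolding mid_def by simp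
    have dmz: "dist V E m z \<le> (if j \<le> mid then mid - j else j - mid)"
    proof (cases "j \<le> mid")
      case True
      have "dist V E (P ! j) (P ! mid) = mid - j" using tree_dist_nth[OF T P(1) True midl] .
      then show ?thesis using True dist_sym[OF sg conn zV mV] j unfolding m_def by simp
    next
      case False
      have "dist V E (P ! mid) (P ! j) = j - mid" using tree_dist_nth[OF T P(1) _ j(1), of mid] False by simp
      then show ?thesis using False j unfolding m_def by simp
    qed
    have "dist V E m x \<le> dist V E m z + dist V E z x" by (rule dist_triangle[OF conn mV zV xV])
    moreover have "dist V E z x = dist V E x z" using dist_sym[OF sg conn xV zV] .
    ultimately show ?thesis using dxz dmz c1 c2 unfolding h_def mid_def
      by (auto split: if_splits)
  qed
  have eccm: "eccentricity V E m \<le> h"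
    unfolding eccentricity_def using fin aV dm by (intro Max.boundedI) auto
  have r1: "radius V E \<le> h"
  proof -
    have "radius V E \<le> eccentricity V E m" unfolding radius_def using fin mV by simp
    then show ?thesis using eccm by simp
  qed
  have dab: "dist V E a b = L"
    using tree_geodesic[OF T P(1)] unfolding a_def b_def L_def .
  have a': "a \<in> V - {u}" and b': "b \<in> V - {u}" using aV bV aP bP uP by auto
  have e': "h \<le> eccentricity (V - {u}) (rmE E u) v" if v': "v \<in> V - {u}" for v
  proof -
    have vV: "v \<in> V" using v' by simp
    have fin': "finite (V - {u})" using fin by simp
    have "dist (V - {u}) (rmE E u) v a \<le> eccentricity (V - {u}) (rmE E u) v"
      unfolding eccentricity_def using fin' a' by simp
    moreover have "dist (V - {u}) (rmE E u) v b \<le> eccentricity (V - {u}) (rmE E u) v"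
      unfolding eccentricity_def using fin' b' by simp
    moreover have "dist (V - {u}) (rmE E u) v a = dist V E v a"
      using rm_dist(1)[OF T leaf v' a'] .
    moreover have "dist (V - {u}) (rmE E u) v b = dist V E v b"
      using rm_dist(1)[OF T leaf v' b'] .
    moreover have "L \<le> dist V E a v + dist V E v b" using dist_triangle[OF conn aV vV bV] dab by simp
    moreover have "dist V E a v = dist V E v a" using dist_sym[OF sg conn vV aV] .
    ultimately have "L \<le> 2 * eccentricity (V - {u}) (rmE E u) v" by linarith
    then show ?thesis unfolding h_def by presburger
  qed
  have r2: "h \<le> radius (V - {u}) (rmE E u)"
    unfolding radius_def using fin a' e' by (intro Min.boundedI) auto
  show ?thesis using uV leaf c3 r1 r2 by (intro exI[of _ u] exI[of _ s]) simp
qed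



lemma pg_adj:
  assumes d: "distinct xs" and s: "set xs = V"
    and adj: "\<forall>u\<in>V. \<forall>v\<in>V. E u v \<longleftrightarrow> (\<exists>i. Suc i < length xs \<and> {xs ! i, xs ! Suc i} = {u, v})"
    and i: "i < length xs" and j: "j < length xs"
  shows "E (xs ! i) (xs ! j) \<longleftrightarrow> (j = Suc i \<or> i = Suc j)"
proof -
  have iV: "xs ! i \<in> V" and jV: "xs ! j \<in> V" using i j s by auto
  have "E (xs ! i) (xs ! j) \<longleftrightarrow> (\<exists>t. Suc t < length xs \<and> {xs ! t, xs ! Suc t} = {xs ! i, xs ! j})"
    using adj iV jV by blast
  also have "\<dots> \<longleftrightarrow> (j = Suc i \<or> i = Suc j)"
  proof
    assume "\<exists>t. Suc t < length xs \<and> {xs ! t, xs ! Suc t} = {xs ! i, xs ! j}"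
    then obtain t where t: "Suc t < length xs" "{xs ! t, xs ! Suc t} = {xs ! i, xs ! j}" by blast
    then have "(xs ! t = xs ! i \<and> xs ! Suc t = xs ! j) \<or> (xs ! t = xs ! j \<and> xs ! Suc t = xs ! i)"
      by (auto simp: doubleton_eq_iff)
    then have "(t = i \<and> Suc t = j) \<or> (t = j \<and> Suc t = i)"
      using d t(1) i j by (auto simp: nth_eq_iff_index_eq)
    then show "j = Suc i \<or> i = Suc j" by auto
  next
    assume "j = Suc i \<or> i = Suc j"
    then show "\<exists>t. Suc t < length xs \<and> {xs ! t, xs ! Suc t} = {xs ! i, xs ! j}"
    proof
      assume "j = Suc i" then show ?thesis using j by (intro exI[of _ i]) auto
    next
      assume "i = Suc j" then show ?thesis using i by (intro exI[of _ j]) auto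
    qed
  qed
  finally show ?thesis .
qed

lemma pg_degree:
  assumes d: "distinct xs" and s: "set xs = V"
    and adj: "\<forall>u\<in>V. \<forall>v\<in>V. E u v \<longleftrightarrow> (\<exists>i. Suc i < length xs \<and> {xs ! i, xs ! Suc i} = {u, v})"
    and i: "i < length xs"
  shows "degree V E (xs ! i) = card {j. j < length xs \<and> (j = Suc i \<or> i = Suc j)}"
proof -
  have "{v \<in> V. E (xs ! i) v} = (\<lambda>j. xs ! j) ` {j. j < length xs \<and> (j = Suc i \<or> i = Suc j)}"
  proof (intro equalityI subsetI)
    fix v assume "v \<in> {v \<in> V. E (xs ! i) v}"
    then have v: "v \<in> V" "E (xs ! i) v" by auto
    then obtain j where j: "j < length xs" "xs ! j = v" using s by (metis in_set_conv_nth)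
    then show "v \<in> (\<lambda>j. xs ! j) ` {j. j < length xs \<and> (j = Suc i \<or> i = Suc j)}"
      using pg_adj[OF d s adj i j(1)] v(2) by auto
  next
    fix v assume "v \<in> (\<lambda>j. xs ! j) ` {j. j < length xs \<and> (j = Suc i \<or> i = Suc j)}"
    then obtain j where j: "j < length xs" "j = Suc i \<or> i = Suc j" "v = xs ! j" by auto
    then show "v \<in> {v \<in> V. E (xs ! i) v}" using pg_adj[OF d s adj i j(1)] s by auto
  qed
  moreover have "inj_on (\<lambda>j. xs ! j) {j. j < length xs \<and> (j = Suc i \<or> i = Suc j)}"
    using d by (auto simp: inj_on_def nth_eq_iff_index_eq)
  ultimately show ?thesis unfolding degree_def by (simp add: card_image)
qed

lemma pg_degree_vals:
  assumes d: "distinct xs" and s: "set xs = V"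
    and adj: "\<forall>u\<in>V. \<forall>v\<in>V. E u v \<longleftrightarrow> (\<exists>i. Suc i < length xs \<and> {xs ! i, xs ! Suc i} = {u, v})"
    and i: "i < length xs" and n2: "length xs \<ge> 2"
  shows "degree V E (xs ! i) = (if i = 0 \<or> i = length xs - 1 then 1 else 2)"
proof -
  let ?n = "length xs"
  have "card {j. j < ?n \<and> (j = Suc i \<or> i = Suc j)} = (if i = 0 \<or> i = ?n - 1 then 1 else 2)"
  proof (cases "i = 0")
    case True
    then have "{j. j < ?n \<and> (j = Suc i \<or> i = Suc j)} = {1}" using n2 by auto
    then show ?thesis using True by simp
  next
    case False
    show ?thesis
    proof (cases "i = ?n - 1")
      case True
      then have "{j. j < ?n \<and> (j = Suc i \<or> i = Suc j)} = {i - 1}" using n2 False by auto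
      then show ?thesis using True by simp
    next
      case False2: False
      then have "{j. j < ?n \<and> (j = Suc i \<or> i = Suc j)} = {i - 1, Suc i}" using n2 False i by auto
      then show ?thesis using False False2 by simp
    qed
  qed
  then show ?thesis using pg_degree[OF d s adj i] by simp
qed

lemma pg_edges:
  assumes d: "distinct xs" and s: "set xs = V"
    and adj: "\<forall>u\<in>V. \<forall>v\<in>V. E u v \<longleftrightarrow> (\<exists>i. Suc i < length xs \<and> {xs ! i, xs ! Suc i} = {u, v})"
  shows "edges V E = (\<lambda>i. {xs ! i, xs ! Suc i}) ` {..<length xs - 1}"
    and "inj_on (\<lambda>i. {xs ! i, xs ! Suc i}) {..<length xs - 1}"
proof -
  show "edges V E = (\<lambda>i. {xs ! i, xs ! Suc i}) ` {..<length xs - 1}"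
  proof (intro equalityI subsetI)
    fix e assume "e \<in> edges V E"
    then obtain u v where uv: "e = {u, v}" "u \<in> V" "v \<in> V" "E u v" unfolding edges_def by blast
    then obtain i where "Suc i < length xs" "{xs ! i, xs ! Suc i} = {u, v}" using adj by blast
    then show "e \<in> (\<lambda>i. {xs ! i, xs ! Suc i}) ` {..<length xs - 1}" using uv by force
  next
    fix e assume "e \<in> (\<lambda>i. {xs ! i, xs ! Suc i}) ` {..<length xs - 1}"
    then obtain i where i: "i < length xs - 1" "e = {xs ! i, xs ! Suc i}" by blast
    then have "E (xs ! i) (xs ! Suc i)" using pg_adj[OF d s adj, of i "Suc i"] by simp
    moreover have "xs ! i \<in> V" "xs ! Suc i \<in> V" using i s by auto
    ultimately show "e \<in> edges V E" unfolding edges_def using i by blast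
  qed
  show "inj_on (\<lambda>i. {xs ! i, xs ! Suc i}) {..<length xs - 1}"
  proof (rule inj_onI)
    fix i j assume ij: "i \<in> {..<length xs - 1}" "j \<in> {..<length xs - 1}"
      "{xs ! i, xs ! Suc i} = {xs ! j, xs ! Suc j}"
    then have "(xs ! i = xs ! j \<and> xs ! Suc i = xs ! Suc j) \<or> (xs ! i = xs ! Suc j \<and> xs ! Suc i = xs ! j)"
      by (auto simp: doubleton_eq_iff)
    then have "(i = j) \<or> (i = Suc j \<and> Suc i = j)"
      using d ij(1,2) by (auto simp: nth_eq_iff_index_eq)
    then show "i = j" by auto
  qed
qed

lemma pg_randic:
  assumes d: "distinct xs" and s: "set xs = V"
    and adj: "\<forall>u\<in>V. \<forall>v\<in>V. E u v \<longleftrightarrow> (\<exists>i. Suc i < length xs \<and> {xs ! i, xs ! Suc i} = {u, v})"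
    and n2: "length xs \<ge> 2"
  shows "randic V E = (if length xs = 2 then 1 else sqrt 2 + (real (length xs) - 3) / 2)"
proof -
  let ?n = "length xs"
  define D where "D i = real (if i = 0 \<or> i = ?n - 1 then 1 else 2 :: nat)" for i
  have dg: "real (degree V E (xs ! i)) = D i" if "i < ?n" for i
    using pg_degree_vals[OF d s adj that n2] unfolding D_def by simp
  have "randic V E = (\<Sum>i<?n - 1. 1 / sqrt (\<Prod>x\<in>{xs ! i, xs ! Suc i}. real (degree V E x)))"
    unfolding randic_def pg_edges(1)[OF d s adj] by (rule sum.reindex_cong[OF pg_edges(2)[OF d s adj]]) auto
  also have "\<dots> = (\<Sum>i<?n - 1. 1 / sqrt (D i * D (Suc i)))"
  proof (rule sum.cong)
    fix i assume "i \<in> {..<?n - 1}"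
    then have i: "Suc i < ?n" by simp
    have "xs ! i \<noteq> xs ! Suc i" using d i by (simp add: nth_eq_iff_index_eq)
    then show "1 / sqrt (\<Prod>x\<in>{xs ! i, xs ! Suc i}. real (degree V E x)) = 1 / sqrt (D i * D (Suc i))"
      using dg[of i] dg[of "Suc i"] i by simp
  qed simp
  finally have R: "randic V E = (\<Sum>i<?n - 1. 1 / sqrt (D i * D (Suc i)))" .
  show ?thesis
  proof (cases "?n = 2")
    case True
    then show ?thesis using R unfolding D_def by simp
  next
    case False
    then have n3: "?n \<ge> 3" using n2 by simp
    have split: "{..<?n - 1} = insert 0 (insert (?n - 2) {1..<?n - 2})" using n3 by auto
    have "(\<Sum>i<?n - 1. 1 / sqrt (D i * D (Suc i)))
        = 1 / sqrt (D 0 * D 1) + (1 / sqrt (D (?n - 2) * D (Suc (?n - 2))) + (\<Sum>i\<in>{1..<?n - 2}. 1 / sqrt (D i * D (Suc i))))"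
      unfolding split using n3 by (simp add: sum.insert)
    also have "(\<Sum>i\<in>{1..<?n - 2}. 1 / sqrt (D i * D (Suc i))) = (\<Sum>i\<in>{1..<?n - 2}. 1 / 2)"
      by (rule sum.cong) (auto simp: D_def)
    also have "\<dots> = (real ?n - 3) / 2" using n3 by (simp add: of_nat_diff)
    also have "D 0 * D 1 = 2" using n3 unfolding D_def by simp
    also have "D (?n - 2) * D (Suc (?n - 2)) = 2" using n3 unfolding D_def by simp
    finally have "randic V E = 2 / sqrt 2 + (real ?n - 3) / 2" using R by simp
    moreover have "2 / sqrt 2 = sqrt (2::real)" by (simp add: real_div_sqrt)
    ultimately show ?thesis using False by simp
  qed
qed



lemma pg_gpath:
  assumes d: "distinct xs" and s: "set xs = V"
    and adj: "\<forall>u\<in>V. \<forall>v\<in>V. E u v \<longleftrightarrow> (\<exists>i. Suc i < length xs \<and> {xs ! i, xs ! Suc i} = {u, v})"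
    and n2: "length xs \<ge> 2"
  shows "gpath V E xs"
proof -
  have "gwalk E xs" unfolding gwalk_nth using pg_adj[OF d s adj] by simp
  then show ?thesis using d s n2 unfolding gpath_def by auto
qed

lemma pg_dist:
  assumes T: "is_tree V E" and d: "distinct xs" and s: "set xs = V"
    and adj: "\<forall>u\<in>V. \<forall>v\<in>V. E u v \<longleftrightarrow> (\<exists>i. Suc i < length xs \<and> {xs ! i, xs ! Suc i} = {u, v})"
    and n2: "length xs \<ge> 2" and i: "i < length xs" and j: "j < length xs"
  shows "dist V E (xs ! i) (xs ! j) = (if i \<le> j then j - i else i - j)"
proof (cases "i \<le> j")
  case True
  then show ?thesis using tree_dist_nth[OF T pg_gpath[OF d s adj n2] True j] by simp
next
  case False
  then have "dist V E (xs ! j) (xs ! i) = i - j" using tree_dist_nth[OF T pg_gpath[OF d s adj n2] _ i, of j] by simp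
  moreover have "dist V E (xs ! i) (xs ! j) = dist V E (xs ! j) (xs ! i)"
    using dist_sym[OF tree_sg[OF T] tree_conn[OF T]] i j s by auto
  ultimately show ?thesis using False by simp
qed

lemma pg_radius:
  assumes T: "is_tree V E" and d: "distinct xs" and s: "set xs = V"
    and adj: "\<forall>u\<in>V. \<forall>v\<in>V. E u v \<longleftrightarrow> (\<exists>i. Suc i < length xs \<and> {xs ! i, xs ! Suc i} = {u, v})"
    and n2: "length xs \<ge> 2"
  shows "radius V E = length xs div 2"
proof -
  let ?n = "length xs"
  have fin: "finite V" using s by auto
  have Vne: "V \<noteq> {}" using s n2 by auto
  let ?c = "?n div 2"
  have c: "?c < ?n" using n2 by simp
  have "eccentricity V E (xs ! ?c) \<le> ?c"
    unfolding eccentricity_def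
  proof (rule Max.boundedI)
    show "finite (dist V E (xs ! ?c) ` V)" using fin by simp
    show "dist V E (xs ! ?c) ` V \<noteq> {}" using Vne by simp
    fix k assume "k \<in> dist V E (xs ! ?c) ` V"
    then obtain v where v: "v \<in> V" "k = dist V E (xs ! ?c) v" by blast
    then obtain j where j: "j < ?n" "xs ! j = v" using s by (metis in_set_conv_nth)
    have "k = (if ?c \<le> j then j - ?c else ?c - j)" using pg_dist[OF T d s adj n2 c j(1)] v j by simp
    then show "k \<le> ?c" using j by (auto split: if_splits)
  qed
  moreover have "radius V E \<le> eccentricity V E (xs ! ?c)"
    unfolding radius_def using fin c s by (intro Min_le) auto
  ultimately have le: "radius V E \<le> ?c" by simp
  have ge: "?c \<le> radius V E"
    unfolding radius_def
  proof (rule Min.boundedI)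
    show "finite (eccentricity V E ` V)" using fin by simp
    show "eccentricity V E ` V \<noteq> {}" using Vne by simp
    fix k assume "k \<in> eccentricity V E ` V"
    then obtain v where v: "v \<in> V" "k = eccentricity V E v" by blast
    then obtain i where i: "i < ?n" "xs ! i = v" using s by (metis in_set_conv_nth)
    have z: "0 < ?n" and l: "?n - 1 < ?n" using n2 by auto
    have "dist V E v (xs ! 0) \<le> k" "dist V E v (xs ! (?n - 1)) \<le> k"
      unfolding v(2) eccentricity_def using fin s z l by (auto intro!: Max_ge)
    moreover have "dist V E v (xs ! 0) = i" using pg_dist[OF T d s adj n2 i(1) z] i by simp
    moreover have "dist V E v (xs ! (?n - 1)) = ?n - 1 - i" using pg_dist[OF T d s adj n2 i(1) l] i by simp
    ultimately show "?c \<le> k" using i(1) by linarith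
  qed
  show ?thesis using le ge by simp
qed



lemma edges_fin: "finite V \<Longrightarrow> finite (edges V E)"
proof -
  assume "finite V"
  moreover have "edges V E \<subseteq> Pow V" unfolding edges_def by auto
  ultimately show ?thesis by (meson finite_Pow_iff finite_subset)
qed

lemma term_bound:
  fixes k t :: real
  assumes "k \<ge> 1" "t \<ge> 1"
  shows "1 / sqrt ((k + 1) * t) - 1 / sqrt (k * t) \<ge> 1 / sqrt (k + 1) - 1 / sqrt k"
proof -
  have st: "sqrt t \<ge> 1" using assms(2) by simp
  have c: "1 / sqrt (k + 1) - 1 / sqrt k \<le> 0"
    using assms(1) by (simp add: divide_simps)
  have "1 / sqrt ((k + 1) * t) - 1 / sqrt (k * t) = (1 / sqrt (k + 1) - 1 / sqrt k) / sqrt t"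
    by (simp add: real_sqrt_mult divide_simps)
  also have "\<dots> \<ge> 1 / sqrt (k + 1) - 1 / sqrt k"
  proof -
    let ?c = "1 / sqrt (k + 1) - 1 / sqrt k"
    have gen: "\<And>c s :: real. c / s - c = c * (1 / s - 1)" by (simp add: right_diff_distrib)
    have "?c / sqrt t - ?c = ?c * (1 / sqrt t - 1)" by (rule gen)
    moreover have "1 / sqrt t - 1 \<le> 0" using st by simp
    ultimately have "?c / sqrt t - ?c \<ge> 0" using c by (simp add: mult_nonpos_nonpos)
    then show ?thesis by simp
  qed
  finally show ?thesis .
qed



lemma gain:
  assumes sg: "simple_graph V E" and uV: "u \<in> V" and leaf: "{y \<in> V. E u y} = {w}"
  shows "randic V E - randic (V - {u}) (rmE E u)
         \<ge> sqrt (real (degree (V - {u}) (rmE E u) w) + 1) - sqrt (real (degree (V - {u}) (rmE E u) w))"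
proof -
  define V' where "V' = V - {u}"
  define E' where "E' = rmE E u"
  define k where "k = degree V' E' w"
  have fin: "finite V" using sg by (rule sg_fin)
  have fin': "finite V'" unfolding V'_def using fin by simp
  have wV: "w \<in> V" and wu: "w \<noteq> u" and euw: "E u w" and ewu: "E w u"
    and onlyw: "\<And>x. x \<in> V \<Longrightarrow> E x u \<Longrightarrow> x = w"
    using leaf_facts[OF sg uV leaf] by blast+
  have wV': "w \<in> V'" unfolding V'_def using wV wu by simp
  have sg': "simple_graph V' E'" unfolding V'_def E'_def by (rule rm_sg[OF sg])
  have deq: "degree V E x = degree V' E' x" if "x \<in> V'" "x \<noteq> w" for x
  proof -
    have "{y \<in> V. E x y} = {y \<in> V'. E' x y}"
      using that onlyw sg_sym[OF sg] unfolding V'_def E'_def rmE_def by auto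
    then show ?thesis unfolding degree_def by simp
  qed
  have dw: "degree V E w = Suc k"
  proof -
    have "{y \<in> V. E w y} = insert u {y \<in> V'. E' w y}"
      using ewu uV wu unfolding V'_def E'_def rmE_def by auto
    moreover have "u \<notin> {y \<in> V'. E' w y}" unfolding V'_def by simp
    moreover have "finite {y \<in> V'. E' w y}" using fin' by simp
    ultimately show ?thesis unfolding degree_def k_def by simp
  qed
  have du: "degree V E u = 1" unfolding degree_def leaf by simp
  have edges_char: "e \<in> edges V' E' \<longleftrightarrow> (\<exists>x y. e = {x, y} \<and> x \<in> V' \<and> y \<in> V' \<and> E' x y)" for e
    unfolding edges_def by blast
  have ins: "edges V E = insert {u, w} (edges V' E')"
  proof (intro equalityI subsetI)
    fix e assume "e \<in> edges V E"
    then obtain x y where xy: "e = {x, y}" "x \<in> V" "y \<in> V" "E x y" unfolding edges_def by blast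
    show "e \<in> insert {u, w} (edges V' E')"
    proof (cases "x = u \<or> y = u")
      case True
      then have "e = {u, w}" using xy onlyw sg_sym[OF sg] leaf by auto
      then show ?thesis by simp
    next
      case False
      then have "e \<in> edges V' E'" using xy unfolding edges_def V'_def E'_def rmE_def by blast
      then show ?thesis by simp
    qed
  next
    fix e assume "e \<in> insert {u, w} (edges V' E')"
    then show "e \<in> edges V E"
    proof
      assume "e = {u, w}" then show ?thesis unfolding edges_def using uV wV euw by blast
    next
      assume "e \<in> edges V' E'"
      then show ?thesis unfolding edges_char edges_def V'_def E'_def rmE_def by blast
    qed
  qed
  have notin: "{u, w} \<notin> edges V' E'"
  proof
    assume "{u, w} \<in> edges V' E'"
    then obtain x y where xy: "{u, w} = {x, y}" "x \<in> V'" "y \<in> V'" unfolding edges_def by blast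
    then have "u \<in> {x, y}" by blast
    then have "u \<in> V'" using xy by blast
    then show False unfolding V'_def by simp
  qed
  have efin: "finite (edges V' E')" using edges_fin[OF fin'] .
  define f where "f e = 1 / sqrt (\<Prod>x\<in>e. real (degree V E x))" for e
  define f' where "f' e = 1 / sqrt (\<Prod>x\<in>e. real (degree V' E' x))" for e
  define N where "N = {y \<in> V'. E' w y}"
  have Nfin: "finite N" unfolding N_def using fin' by simp
  have cardN: "card N = k" unfolding N_def k_def degree_def ..
  define A where "A = {e \<in> edges V' E'. w \<in> e}"
  define B where "B = {e \<in> edges V' E'. w \<notin> e}"
  have AB: "edges V' E' = A \<union> B" "A \<inter> B = {}" unfolding A_def B_def by auto
  have Afin: "finite A" and Bfin: "finite B" using efin unfolding A_def B_def by auto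
  have Aim: "A = (\<lambda>y. {w, y}) ` N"
  proof (intro equalityI subsetI)
    fix e assume "e \<in> A"
    then obtain x y where xy: "e = {x, y}" "x \<in> V'" "y \<in> V'" "E' x y" "w \<in> e"
      unfolding A_def edges_char by blast
    then have "x = w \<or> y = w" by auto
    then show "e \<in> (\<lambda>y. {w, y}) ` N"
    proof
      assume "x = w" then show ?thesis using xy unfolding N_def by auto
    next
      assume "y = w"
      moreover have "E' y x" using xy(4) sg_sym[OF sg'] by blast
      ultimately show ?thesis using xy unfolding N_def by auto
    qed
  next
    fix e assume "e \<in> (\<lambda>y. {w, y}) ` N"
    then obtain y where "y \<in> N" "e = {w, y}" by blast
    then show "e \<in> A" unfolding A_def edges_char N_def using wV' by auto
  qed
  have Ainj: "inj_on (\<lambda>y. {w, y}) N"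
  proof (rule inj_onI)
    fix y z assume "y \<in> N" "z \<in> N" "{w, y} = {w, z}"
    moreover have "y \<noteq> w" "z \<noteq> w" using calculation(1,2) sg_irr[OF sg'] unfolding N_def by auto
    ultimately show "y = z" by (auto simp: doubleton_eq_iff)
  qed
  have yN: "y \<in> V'" "y \<noteq> w" "degree V' E' y \<ge> 1" if "y \<in> N" for y
  proof -
    show "y \<in> V'" using that unfolding N_def by simp
    show "y \<noteq> w" using that sg_irr[OF sg'] unfolding N_def by auto
    have "w \<in> {z \<in> V'. E' y z}" using that sg_sym[OF sg'] wV' unfolding N_def by auto
    moreover have "finite {z \<in> V'. E' y z}" using fin' by simp
    ultimately show "degree V' E' y \<ge> 1" unfolding degree_def
      by (metis card_0_eq empty_iff less_one not_le)
  qed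
  have sumB: "sum f B = sum f' B"
  proof (rule sum.cong)
    fix e assume "e \<in> B"
    then obtain x y where xy: "e = {x, y}" "x \<in> V'" "y \<in> V'" "w \<notin> e" unfolding B_def edges_char by blast
    have "(\<Prod>z\<in>e. real (degree V E z)) = (\<Prod>z\<in>e. real (degree V' E' z))"
      using xy deq by (intro prod.cong) auto
    then show "f e = f' e" unfolding f_def f'_def by simp
  qed simp
  have sumA: "sum f A = (\<Sum>y\<in>N. 1 / sqrt ((real k + 1) * real (degree V' E' y)))"
    unfolding Aim sum.reindex[OF Ainj] o_def f_def
  proof (rule sum.cong)
    fix y assume y: "y \<in> N"
    then show "1 / sqrt (\<Prod>x\<in>{w, y}. real (degree V E x)) = 1 / sqrt ((real k + 1) * real (degree V' E' y))"
      using yN[OF y] dw deq by simp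
  qed simp
  have sumA': "sum f' A = (\<Sum>y\<in>N. 1 / sqrt (real k * real (degree V' E' y)))"
    unfolding Aim sum.reindex[OF Ainj] o_def f'_def
  proof (rule sum.cong)
    fix y assume y: "y \<in> N"
    then show "1 / sqrt (\<Prod>x\<in>{w, y}. real (degree V' E' x)) = 1 / sqrt (real k * real (degree V' E' y))"
      using yN[OF y] unfolding k_def by simp
  qed simp
  have fuw: "f {u, w} = 1 / sqrt (real k + 1)" unfolding f_def using wu du dw by simp
  have RV: "randic V E = f {u, w} + sum f A + sum f B"
    unfolding randic_def ins f_def[symmetric] using efin notin AB Afin Bfin by (simp add: sum.union_disjoint)
  have RV': "randic V' E' = sum f' A + sum f' B"
    unfolding randic_def f'_def[symmetric] using AB Afin Bfin by (simp add: sum.union_disjoint)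
  have diff: "randic V E - randic V' E' = 1 / sqrt (real k + 1)
      + (\<Sum>y\<in>N. 1 / sqrt ((real k + 1) * real (degree V' E' y)) - 1 / sqrt (real k * real (degree V' E' y)))"
    using RV RV' sumA sumA' sumB fuw by (simp add: sum_subtractf)
  have bnd: "real (card N) * (1 / sqrt (real k + 1) - 1 / sqrt (real k))
      \<le> (\<Sum>y\<in>N. 1 / sqrt ((real k + 1) * real (degree V' E' y)) - 1 / sqrt (real k * real (degree V' E' y)))"
  proof (rule sum_bounded_below)
    fix y assume y: "y \<in> N"
    have "k \<ge> 1" using y Nfin cardN by (metis card_0_eq empty_iff less_one not_le)
    then show "1 / sqrt (real k + 1) - 1 / sqrt (real k)
        \<le> 1 / sqrt ((real k + 1) * real (degree V' E' y)) - 1 / sqrt (real k * real (degree V' E' y))"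
      using term_bound[of "real k" "real (degree V' E' y)"] yN(3)[OF y] by simp
  qed
  have "1 / sqrt (real k + 1) + real k * (1 / sqrt (real k + 1) - 1 / sqrt (real k))
      = (real k + 1) / sqrt (real k + 1) - real k / sqrt (real k)"
    by (simp add: algebra_simps add_divide_distrib)
  also have "\<dots> = sqrt (real k + 1) - sqrt (real k)" by (simp add: real_div_sqrt)
  finally have "sqrt (real k + 1) - sqrt (real k) \<le> randic V E - randic V' E'"
    using diff bnd[unfolded cardN] by linarith
  then show ?thesis unfolding V'_def E'_def k_def by simp
qed



lemma path_case:
  assumes T: "is_tree V E" and pg: "is_path_graph V E" and c: "card V \<ge> 2"
  shows "randic V E = (if card V = 2 then 1 else sqrt 2 + (real (card V) - 3) / 2)"
    and "radius V E = card V div 2"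
    and "\<And>x. x \<in> V \<Longrightarrow> degree V E x \<le> 2"
proof -
  obtain xs where d: "distinct xs" and s: "set xs = V"
    and adj: "\<forall>u\<in>V. \<forall>v\<in>V. E u v \<longleftrightarrow> (\<exists>i. Suc i < length xs \<and> {xs ! i, xs ! Suc i} = {u, v})"
    using pg unfolding is_path_graph_def by blast
  have len: "length xs = card V" using distinct_card[OF d] s by simp
  have n2: "length xs \<ge> 2" using c len by simp
  show "randic V E = (if card V = 2 then 1 else sqrt 2 + (real (card V) - 3) / 2)"
    using pg_randic[OF d s adj n2] len by simp
  show "radius V E = card V div 2" using pg_radius[OF T d s adj n2] len by simp
  fix x assume "x \<in> V"
  then obtain i where "i < length xs" "xs ! i = x" using s by (metis in_set_conv_nth)
  then show "degree V E x \<le> 2" using pg_degree_vals[OF d s adj _ n2, of i] by simp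
qed

lemma sqrt2_bounds: "sqrt (2::real) \<le> 3 / 2" "sqrt (2::real) \<ge> 5 / 4" "sqrt (3::real) \<ge> 3 / 2"
proof -
  have "sqrt (2::real) \<le> sqrt (9 / 4)" by (simp add: real_sqrt_le_iff)
  also have "sqrt (9 / 4 :: real) = 3 / 2" by (simp add: real_sqrt_divide)
  finally show "sqrt (2::real) \<le> 3 / 2" .
  show "sqrt (2::real) \<ge> 5 / 4" by (rule real_le_rsqrt) (simp add: power2_eq_square)
  show "sqrt (3::real) \<ge> 3 / 2" by (rule real_le_rsqrt) (simp add: power2_eq_square)
qed

lemma path_slack:
  assumes T: "is_tree V E" and pg: "is_path_graph V E" and c: "card V \<ge> 2"
  shows "randic V E - real (radius V E) \<ge> sqrt 2 - 3 / 2"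
proof (cases "card V = 2")
  case True
  then show ?thesis using path_case[OF T pg c] sqrt2_bounds by simp
next
  case False
  have "real (card V div 2) \<le> real (card V) / 2" by linarith
  moreover have "randic V E = sqrt 2 + (real (card V) - 3) / 2" using path_case(1)[OF T pg c] False by simp
  moreover have "real (radius V E) = real (card V div 2)" using path_case(2)[OF T pg c] by simp
  ultimately show ?thesis by (simp add: field_simps)
qed

lemma gain_small:
  assumes "k \<le> (2::nat)"
  shows "sqrt (real k + 1) - sqrt (real k) \<ge> 3 / 2 - sqrt 2"
proof -
  have "k = 0 \<or> k = 1 \<or> k = 2" using assms by auto
  then show ?thesis using sqrt2_bounds by auto
qed

lemma nonpath_main:
  "\<And>V E. card V = n \<Longrightarrow> is_tree V E \<Longrightarrow> card V \<ge> 2 \<Longrightarrow> \<not> is_path_graph V E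
    \<Longrightarrow> real (radius V E) \<le> randic V E"
proof (induction n rule: less_induct)
  case (less n V E)
  have T: "is_tree V E" using less.prems(2) .
  have sg: "simple_graph V E" using T by (rule tree_sg)
  obtain u w where uV: "u \<in> V" and leaf: "{y \<in> V. E u y} = {w}" and c3: "card V \<ge> 3"
    and rr: "radius V E \<le> radius (V - {u}) (rmE E u)"
    using tree_struct[OF T less.prems(3,4)] by blast
  have T': "is_tree (V - {u}) (rmE E u)" using rm_tree[OF T leaf uV less.prems(3)] .
  have fin: "finite V" using sg by (rule sg_fin)
  have c': "card (V - {u}) = n - 1" using uV fin less.prems(1) by simp
  have c2': "card (V - {u}) \<ge> 2" using c' c3 less.prems(1) by simp
  let ?k = "degree (V - {u}) (rmE E u) w"
  have g: "randic V E - randic (V - {u}) (rmE E u) \<ge> sqrt (real ?k + 1) - sqrt (real ?k)"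
    using gain[OF sg uV leaf] .
  have g0: "sqrt (real ?k + 1) - sqrt (real ?k) \<ge> 0" by simp
  show ?case
  proof (cases "is_path_graph (V - {u}) (rmE E u)")
    case True
    have wV': "w \<in> V - {u}" using leaf_facts(1,2)[OF sg uV leaf] by simp
    have "?k \<le> 2" using path_case(3)[OF T' True c2' wV'] .
    then have "sqrt (real ?k + 1) - sqrt (real ?k) \<ge> 3 / 2 - sqrt 2" by (rule gain_small)
    moreover have "randic (V - {u}) (rmE E u) - real (radius (V - {u}) (rmE E u)) \<ge> sqrt 2 - 3 / 2"
      using path_slack[OF T' True c2'] .
    moreover have "real (radius V E) \<le> real (radius (V - {u}) (rmE E u))" using rr by simp
    ultimately show ?thesis using g by linarith
  next
    case False
    have "real (radius (V - {u}) (rmE E u)) \<le> randic (V - {u}) (rmE E u)"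
      using less.IH[OF _ refl T' c2' False] c' less.prems(1) c3 by simp
    moreover have "real (radius V E) \<le> real (radius (V - {u}) (rmE E u))" using rr by simp
    ultimately show ?thesis using g g0 by linarith
  qed
qed

theorem theorem5p1:
  fixes V :: "'a set" and E :: "'a \<Rightarrow> 'a \<Rightarrow> bool"
  assumes "is_tree V E" and "card V \<ge> 2"
  shows "(is_path_graph V E \<and> even (card V) \<and> card V > 2 \<longrightarrow>
            randic V E - real (radius V E) = sqrt 2 - 3 / 2)
       \<and> (\<not> (is_path_graph V E \<and> even (card V) \<and> card V > 2) \<longrightarrow>
            randic V E - real (radius V E) \<ge> 0)
       \<and> (card V = 2 \<longrightarrow> randic V E - real (radius V E) = 0)"
proof (cases "is_path_graph V E")
  case True
  note pc = path_case[OF assms(1) True assms(2)]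
  have A: "randic V E - real (radius V E) = sqrt 2 - 3 / 2" if ev: "even (card V)" "card V > 2"
  proof -
    obtain m where m: "card V = 2 * m" using ev(1) by (rule evenE)
    then show ?thesis using pc(1,2) ev(2) by (simp add: field_simps)
  qed
  have B: "randic V E - real (radius V E) \<ge> 0" if "\<not> (even (card V) \<and> card V > 2)"
  proof (cases "card V = 2")
    case True
    then show ?thesis using pc(1,2) by simp
  next
    case False
    then have "odd (card V)" using that assms(2) by auto
    then obtain m where m: "card V = 2 * m + 1" by (metis oddE)
    then have "randic V E - real (radius V E) = sqrt 2 - 1" using pc(1,2) False by (simp add: field_simps)
    moreover have "sqrt (2::real) \<ge> 1" by simp
    ultimately show ?thesis by simp
  qed
  have C: "randic V E - real (radius V E) = 0" if "card V = 2" using pc(1,2) that by simp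
  show ?thesis using A B C True by blast
next
  case False
  have "real (radius V E) \<le> randic V E" using nonpath_main[OF refl assms False] .
  moreover have "card V \<ge> 3" using tree_struct[OF assms False] by blast
  ultimately show ?thesis using False by simp
qed


end
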